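(* Let $n\ge2$ and $(x,y)\in\mathbb{C}^n\times\mathbb{C}^{n-1}$. Then $(x,y)\in\mathbb{G}_{1,n}$ if and only if both of the following hold: (I) the restriction of $\Psi_n(\cdot;x,y)$ to $\overline{\mathbb{D}}$ lies in $\mathcal{O}(\mathbb{D})\cap\mathcal{C}(\overline{\mathbb{D}})$ and $\sup_{z\in\partial\mathbb{D}}|\Psi_n(z;x,y)|<1$; (II) if $\mathscr{R}_n(x,y)=0$, then every common zero of $P_n(\cdot;x)$ and $Q_n(\cdot;y)$ lies outside $\overline{\mathbb{D}}$.
   Context: $\mathbb{D}$ is the open unit disc. $P_n(z;x):=\sum_{j=0}^{n-1}(-1)^jx_{j+1}z^j$, $Q_n(z;y):=1+\sum_{j=1}^{n-1}(-1)^jy_jz^j$. $\mathbb{G}_{1,n}:=\{(x,y)\in\mathbb{C}^n\times\mathbb{C}^{n-1}: \text{the zero set of }(z,w)\mapsto Q_n(z;y)-wP_n(z;x)\text{ does not meet }\overline{\mathbb{D}}^2\}$. $\Psi_n(\cdot;x,y)$ is the rational function $P_n(\cdot;x)/Q_n(\cdot;y)$ with all common linear factors of numerator and denominator cancelled. $\mathscr{R}_n(x,y)$ is the resultant of the univariate polynomials $P_n(\cdot;x)$ and $Q_n(\cdot;y)$. *)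

theory Defs
  imports "HOL-Analysis.Analysis" "HOL-Computational_Algebra.Computational_Algebra" "HOL-Computational_Algebra.Field_as_Ring" "Subresultants.Resultant_Prelim"
begin

text \<open>Vectors x in C^n and y in C^(n-1) are represented as functions nat => complex;
  only x 1, ..., x n and y 1, ..., y (n-1) are ever used.\<close>

definition Pn :: "nat \<Rightarrow> (nat \<Rightarrow> complex) \<Rightarrow> complex poly" where
  "Pn n x = (\<Sum>j<n. monom ((-1) ^ j * x (j + 1)) j)"

definition Qn :: "nat \<Rightarrow> (nat \<Rightarrow> complex) \<Rightarrow> complex poly" where
  "Qn n y = 1 + (\<Sum>j\<in>{1..<n}. monom ((-1) ^ j * y j) j)"

definition G1n :: "nat \<Rightarrow> ((nat \<Rightarrow> complex) \<times> (nat \<Rightarrow> complex)) set" where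
  "G1n n = {(x, y). \<forall>z w. cmod z \<le> 1 \<longrightarrow> cmod w \<le> 1 \<longrightarrow>
                     poly (Qn n y) z - w * poly (Pn n x) z \<noteq> 0}"

text \<open>Isabelle's convention a/0 = 0 is used at poles; since numerator and denominator
  are coprime, the function fails to be continuous at any pole.\<close>

definition Psin :: "nat \<Rightarrow> (nat \<Rightarrow> complex) \<Rightarrow> (nat \<Rightarrow> complex) \<Rightarrow> complex \<Rightarrow> complex" where
  "Psin n x y z = (let g = gcd (Pn n x) (Qn n y)
                   in poly (Pn n x div g) z / poly (Qn n y div g) z)"

definition Rn :: "nat \<Rightarrow> (nat \<Rightarrow> complex) \<Rightarrow> (nat \<Rightarrow> complex) \<Rightarrow> complex" where
  "Rn n x y = resultant (Pn n x) (Qn n y)"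

end

theory Submission
  imports Defs "HOL-Complex_Analysis.Conformal_Mappings"
begin


lemma poly_sum_upto:
  fixes r :: "'a::comm_semiring_1 poly"
  assumes "degree r \<le> N"
  shows "poly r a = (\<Sum>k<Suc N. coeff r k * a ^ k)"
proof -
  have "poly r a = (\<Sum>k\<le>degree r. coeff r k * a ^ k)" by (simp add: poly_altdef)
  also have "\<dots> = (\<Sum>k<Suc N. coeff r k * a ^ k)"
    by (rule sum.mono_neutral_left) (use assms in \<open>auto intro: le_degree\<close>)
  finally show ?thesis .
qed

lemma sum_coeff_rev:
  fixes r :: "'a::comm_semiring_1 poly"
  assumes "degree r \<le> N" "coeff r 0 = 0"
  shows "(\<Sum>j<N. coeff r (N - j) * a ^ (N - j)) = poly r a"
proof -
  have "(\<Sum>j<N. coeff r (N - j) * a ^ (N - j)) = (\<Sum>j<N. (\<lambda>k. coeff r (Suc k) * a ^ Suc k) (N - Suc j))"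
    by (rule sum.cong) (auto simp: Suc_diff_Suc)
  also have "\<dots> = (\<Sum>k<N. coeff r (Suc k) * a ^ Suc k)" by (rule sum.nat_diff_reindex)
  also have "\<dots> = (\<Sum>k<Suc N. coeff r k * a ^ k)" unfolding sum.lessThan_Suc_shift using assms(2) by simp
  also have "\<dots> = poly r a" using poly_sum_upto[OF assms(1)] by simp
  finally show ?thesis .
qed

lemma resultant_common_root:
  fixes p q :: "'a::idom poly"
  assumes "poly p a = 0" "poly q a = 0" "a \<noteq> 0" "degree p + degree q > 0"
  shows "resultant p q = 0"
proof -
  define m where "m = degree p"
  define n where "n = degree q"
  define N where "N = m + n"
  define v where "v = vec N (\<lambda>j. a ^ (N - j))"
  have A: "sylvester_mat p q \<in> carrier_mat N N" using sylvester_carrier_mat[of p q] by (simp add: N_def m_def n_def)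
  have vc: "v \<in> carrier_vec N" unfolding v_def by simp
  have vnz: "v \<noteq> 0\<^sub>v N"
  proof
    assume "v = 0\<^sub>v N"
    then have "v $ (N - 1) = 0" using assms(4) unfolding N_def m_def n_def by simp
    then show False using assms(3) assms(4) unfolding v_def N_def m_def n_def by simp
  qed
  have "sylvester_mat p q *\<^sub>v v = 0\<^sub>v N"
  proof (rule eq_vecI)
    show "dim_vec (sylvester_mat p q *\<^sub>v v) = dim_vec (0\<^sub>v N)" using A by (simp add: N_def m_def n_def)
    fix i assume "i < dim_vec (0\<^sub>v N)"
    then have i: "i < N" by simp
    define r where "r = (if i < n then monom 1 (n - i) * p else monom 1 (N - i) * q)"
    have ent: "\<And>j. j < N \<Longrightarrow> sylvester_mat p q $$ (i, j) = coeff r (N - j)"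
      using sylvester_index_mat2[of i p q] i unfolding r_def N_def m_def n_def by auto
    have "(sylvester_mat p q *\<^sub>v v) $ i = row (sylvester_mat p q) i \<bullet> v"
    proof -
      have dr: "i < dim_row (sylvester_mat p q)" using i by (simp add: N_def m_def n_def)
      show ?thesis by (rule index_mult_mat_vec[OF dr])
    qed
    also have "\<dots> = (\<Sum>j<N. coeff r (N - j) * a ^ (N - j))"
      unfolding scalar_prod_def using A i vc
      by (auto simp: v_def ent lessThan_atLeast0 intro!: sum.cong)
    also have "\<dots> = poly r a"
    proof (rule sum_coeff_rev)
      show "degree r \<le> N" unfolding r_def N_def m_def n_def using i
        by (auto simp: degree_monom_eq N_def m_def n_def intro!: order.trans[OF degree_mult_le])
      show "coeff r 0 = 0" unfolding r_def using i by (auto simp: coeff_monom_mult N_def coeff_monom_Suc)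
    qed
    also have "\<dots> = 0" unfolding r_def using assms by (simp add: poly_monom)
    finally show "(sylvester_mat p q *\<^sub>v v) $ i = 0\<^sub>v N $ i" using i by simp
  qed
  then have "det (sylvester_mat p q) = 0"
    using det_0_iff_vec_prod_zero[OF A] vc vnz by blast
  then show ?thesis unfolding resultant_def .
qed


lemma coprime_no_common_root:
  fixes p q :: "complex poly"
  assumes "coprime p q" "poly p z = 0" "poly q z = 0"
  shows False
proof -
  have "[:-z, 1:] dvd p" "[:-z, 1:] dvd q" using assms by (simp_all add: poly_eq_0_iff_dvd)
  then have "is_unit [:-z, 1:]" using assms(1) coprime_common_divisor by blast
  then show False by (simp add: is_unit_iff_degree)
qed

lemma G1n_iff:
  "(x, y) \<in> G1n n \<longleftrightarrow> (\<forall>z. cmod z \<le> 1 \<longrightarrow> cmod (poly (Pn n x) z) < cmod (poly (Qn n y) z))"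
proof -
  have "(\<forall>w. cmod w \<le> 1 \<longrightarrow> Q - w * P \<noteq> 0) \<longleftrightarrow> cmod P < cmod Q" for P Q :: complex
  proof
    assume H: "\<forall>w. cmod w \<le> 1 \<longrightarrow> Q - w * P \<noteq> 0"
    show "cmod P < cmod Q"
    proof (rule ccontr)
      assume "\<not> cmod P < cmod Q"
      then have le: "cmod Q \<le> cmod P" by simp
      show False
      proof (cases "P = 0")
        case True
        then show False using H le by (auto dest: spec[of _ 0])
      next
        case False
        have "cmod (Q / P) \<le> 1" using le False by (simp add: norm_divide divide_le_eq_1)
        moreover have "Q - (Q / P) * P = 0" using False by simp
        ultimately show False using H by blast
      qed
    qed
  next
    assume lt: "cmod P < cmod Q"
    show "\<forall>w. cmod w \<le> 1 \<longrightarrow> Q - w * P \<noteq> 0"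
    proof (intro allI impI notI)
      fix w :: complex assume w: "cmod w \<le> 1" and e: "Q - w * P = 0"
      then have "Q = w * P" by simp
      then have "cmod Q \<le> cmod P" using w by (simp add: norm_mult mult_left_le_one_le)
      then show False using lt by simp
    qed
  qed
  then show ?thesis unfolding G1n_def by auto
qed

lemma Qn_0: "poly (Qn n y) 0 = 1"
  by (simp add: Qn_def poly_sum poly_monom)

theorem theorem3p2:
  fixes n :: nat and x y :: "nat \<Rightarrow> complex"
  assumes "n \<ge> 2"
  shows "(x, y) \<in> G1n n \<longleftrightarrow>
         ((Psin n x y holomorphic_on ball 0 1 \<and> continuous_on (cball 0 1) (Psin n x y) \<and>
           (SUP z\<in>sphere 0 1. cmod (Psin n x y z)) < 1) \<and>
          (Rn n x y = 0 \<longrightarrow>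
             (\<forall>z. poly (Pn n x) z = 0 \<and> poly (Qn n y) z = 0 \<longrightarrow> z \<notin> cball 0 1)))"
proof -
  define P where "P = Pn n x"
  define Q where "Q = Qn n y"
  define g where "g = gcd P Q"
  define p where "p = P div g"
  define q where "q = Q div g"
  have Q0: "poly Q 0 = 1" unfolding Q_def by (rule Qn_0)
  have Qnz: "Q \<noteq> 0" using Q0 by auto
  have gnz: "g \<noteq> 0" using Qnz unfolding g_def by simp
  have Pfac: "P = p * g" unfolding p_def g_def by simp
  have Qfac: "Q = q * g" unfolding q_def g_def by simp
  have qnz: "q \<noteq> 0" using Qnz Qfac by auto
  have cop: "coprime p q" unfolding p_def q_def g_def using Qnz by (intro div_gcd_coprime) simp
  have Psi: "Psin n x y = (\<lambda>z. poly p z / poly q z)"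
    by (rule ext) (simp add: Psin_def Let_def p_def q_def g_def P_def Q_def)
  have Rn: "Rn n x y = resultant P Q" unfolding Rn_def P_def Q_def ..
  show ?thesis
    unfolding G1n_iff P_def[symmetric] Q_def[symmetric] Rn
  proof
    assume lt: "\<forall>z. cmod z \<le> 1 \<longrightarrow> cmod (poly P z) < cmod (poly Q z)"
    have Qz: "poly Q z \<noteq> 0" if "z \<in> cball 0 1" for z
      using lt that by (auto dest!: spec[of _ z])
    have qz: "poly q z \<noteq> 0" if "z \<in> cball 0 1" for z
      using Qz[OF that] Qfac by auto
    have gz: "poly g z \<noteq> 0" if "z \<in> cball 0 1" for z
      using Qz[OF that] Qfac by auto
    have PsiPQ: "Psin n x y z = poly P z / poly Q z" if "z \<in> cball 0 1" for z
      using gz[OF that] unfolding Psi Pfac Qfac by simp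
    have hol: "Psin n x y holomorphic_on ball 0 1"
      unfolding Psi using qz by (intro holomorphic_intros) auto
    have cont: "continuous_on (cball 0 1) (Psin n x y)"
      unfolding Psi using qz by (intro continuous_intros) auto
    have contS: "continuous_on (sphere 0 1) (\<lambda>z. cmod (Psin n x y z))"
      by (intro continuous_intros continuous_on_subset[OF cont]) auto
    have ne: "sphere (0::complex) 1 \<noteq> {}"
    proof -
      have "(1::complex) \<in> sphere 0 1" by simp
      then show ?thesis by blast
    qed
    obtain z0 where z0: "z0 \<in> sphere 0 1" and z0max: "\<And>z. z \<in> sphere 0 1 \<Longrightarrow> cmod (Psin n x y z) \<le> cmod (Psin n x y z0)"
      using continuous_attains_sup[OF compact_sphere ne contS] by blast
    have z0c: "z0 \<in> cball 0 1" using z0 by simp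
    have "cmod (Psin n x y z0) < 1"
      using PsiPQ[OF z0c] lt Qz[OF z0c] z0c by (simp add: norm_divide divide_less_eq_1)
    moreover have "(SUP z\<in>sphere 0 1. cmod (Psin n x y z)) \<le> cmod (Psin n x y z0)"
      using ne z0max by (intro cSUP_least) auto
    ultimately have sup: "(SUP z\<in>sphere 0 1. cmod (Psin n x y z)) < 1" by linarith
    have II: "\<forall>z. poly P z = 0 \<and> poly Q z = 0 \<longrightarrow> z \<notin> cball 0 1"
      using Qz by blast
    show "(Psin n x y holomorphic_on ball 0 1 \<and> continuous_on (cball 0 1) (Psin n x y) \<and>
           (SUP z\<in>sphere 0 1. cmod (Psin n x y z)) < 1) \<and>
          (resultant P Q = 0 \<longrightarrow> (\<forall>z. poly P z = 0 \<and> poly Q z = 0 \<longrightarrow> z \<notin> cball 0 1))"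
      using hol cont sup II by blast
  next
    assume H: "(Psin n x y holomorphic_on ball 0 1 \<and> continuous_on (cball 0 1) (Psin n x y) \<and>
           (SUP z\<in>sphere 0 1. cmod (Psin n x y z)) < 1) \<and>
          (resultant P Q = 0 \<longrightarrow> (\<forall>z. poly P z = 0 \<and> poly Q z = 0 \<longrightarrow> z \<notin> cball 0 1))"
    then have hol: "Psin n x y holomorphic_on ball 0 1"
      and cont: "continuous_on (cball 0 1) (Psin n x y)"
      and sup: "(SUP z\<in>sphere 0 1. cmod (Psin n x y z)) < 1"
      and II: "resultant P Q = 0 \<Longrightarrow> poly P z = 0 \<Longrightarrow> poly Q z = 0 \<Longrightarrow> z \<notin> cball 0 1" for z
      by blast+
    define R where "R = {z. poly q z = 0}"
    have finR: "finite R" unfolding R_def using qnz by (rule poly_roots_finite)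
    define f where "f = (\<lambda>w. poly p w - Psin n x y w * poly q w)"
    have contf: "continuous_on (cball 0 1) f"
      unfolding f_def by (intro continuous_intros cont)
    have f0: "f w = 0" if "w \<notin> R" for w
      using that unfolding f_def R_def Psi by simp
    have qz: "poly q z \<noteq> 0" if z: "z \<in> cball 0 1" for z
    proof
      assume qz0: "poly q z = 0"
      let ?T = "cball 0 1 - R"
      have "z islimpt ball 0 1" using z by (simp add: islimpt_ball)
      then have "z islimpt cball 0 1" by (rule islimpt_subset) auto
      then have "z islimpt (?T \<union> R)" by (rule islimpt_subset) auto
      then have lp: "z islimpt ?T" using islimpt_finite[OF finR] islimpt_Un by blast
      have "continuous (at z within cball 0 1) f"
        using contf z by (simp add: continuous_on_eq_continuous_within)
      then have "continuous (at z within ?T) f" by (rule continuous_within_subset) auto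
      then have t1: "(f \<longlongrightarrow> f z) (at z within ?T)" by (simp add: continuous_within)
      have ev: "eventually (\<lambda>w. 0 = f w) (at z within ?T)"
        unfolding eventually_at_filter using f0 by (auto intro!: always_eventually)
      have t2: "(f \<longlongrightarrow> 0) (at z within ?T)"
        by (rule Lim_transform_eventually[OF tendsto_const ev])
      have "f z = 0"
        using tendsto_unique[OF _ t1 t2] lp by (simp add: trivial_limit_within)
      then have "poly p z = 0" using qz0 unfolding f_def by simp
      then show False using coprime_no_common_root[OF cop _ qz0] by blast
    qed
    have contS: "continuous_on (sphere 0 1) (\<lambda>z. cmod (Psin n x y z))"
      by (intro continuous_intros continuous_on_subset[OF cont]) auto
    have ne: "sphere (0::complex) 1 \<noteq> {}"
    proof -
      have "(1::complex) \<in> sphere 0 1" by simp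
      then show ?thesis by blast
    qed
    obtain z0 where z0: "z0 \<in> sphere 0 1" and z0max: "\<And>z. z \<in> sphere 0 1 \<Longrightarrow> cmod (Psin n x y z) \<le> cmod (Psin n x y z0)"
      using continuous_attains_sup[OF compact_sphere ne contS] by blast
    have bdd: "bdd_above ((\<lambda>z. cmod (Psin n x y z)) ` sphere 0 1)"
      using z0max by (intro bdd_aboveI) auto
    have onS: "cmod (Psin n x y z) \<le> (SUP z\<in>sphere 0 1. cmod (Psin n x y z))" if "z \<in> sphere 0 1" for z
      using that bdd by (rule cSUP_upper)
    have le: "cmod (Psin n x y z) \<le> (SUP z\<in>sphere 0 1. cmod (Psin n x y z))" if "z \<in> cball 0 1" for z
    proof -
      have fr: "\<And>w. w \<in> frontier (cball (0::complex) 1) \<Longrightarrow> cmod (Psin n x y w) \<le> (SUP z\<in>sphere 0 1. cmod (Psin n x y z))"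
        using onS by simp
      have h: "Psin n x y holomorphic_on interior (cball 0 1)" using hol by simp
      have c: "continuous_on (closure (cball 0 1)) (Psin n x y)" using cont by simp
      have b: "bounded (cball (0::complex) 1)" by simp
      show ?thesis by (rule maximum_modulus_frontier[OF h c b fr that])
    qed
    show "\<forall>z. cmod z \<le> 1 \<longrightarrow> cmod (poly P z) < cmod (poly Q z)"
    proof (intro allI impI)
      fix z :: complex assume zc: "cmod z \<le> 1"
      then have zin: "z \<in> cball 0 1" by simp
      show "cmod (poly P z) < cmod (poly Q z)"
      proof (cases "poly g z = 0")
        case True
        then have P0: "poly P z = 0" and Q0': "poly Q z = 0" unfolding Pfac Qfac by simp_all
        have znz: "z \<noteq> 0" using Q0 Q0' by auto
        have "degree Q > 0"
        proof (rule ccontr)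
          assume "\<not> degree Q > 0"
          then have "degree Q = 0" by simp
          then obtain c where "Q = [:c:]" using degree_eq_zeroE by blast
          then show False using Q0 Q0' by simp
        qed
        then have "resultant P Q = 0"
          by (intro resultant_common_root[OF P0 Q0' znz]) simp
        then show ?thesis using II[OF _ P0 Q0'] zin by blast
      next
        case False
        have Qz: "poly Q z \<noteq> 0" using False qz[OF zin] unfolding Qfac by simp
        have "Psin n x y z = poly P z / poly Q z"
          using False unfolding Psi Pfac Qfac by simp
        then have "cmod (poly P z / poly Q z) < 1" using le[OF zin] sup by simp
        then show ?thesis using Qz by (simp add: norm_divide divide_less_eq_1)
      qed
    qed
  qed
qed

end
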